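(* Let $F_0\in\mathcal F$. For all $x<1/2$ and all integers $t>0$, $$F_{3,t}(x)\le \tfrac34\, F_{3,t-1}(x) + F_{3,t-1}(x)^3,$$ and consequently $$F_{3,t}(x)\le F_0(x)\cdot\left[\tfrac34 + F_0(x)^2\right]^t.$$
   Context: Voters form a continuum uniformly distributed on $[0,1]$. Candidates occupy points of $[0,1]$ and each voter votes for the nearest candidate. For candidates at distinct positions, the vote share of a candidate is the measure of the set of voters closer to it than to any other candidate: half the distance between its left and right neighbours, where a leftmost candidate at $y$ additionally receives all of $[0,y]$ and a rightmost candidate at $y$ additionally receives all of $[y,1]$. The plurality winner is the candidate with largest vote share, ties broken uniformly at random. Write $\mathrm{plurality}(x_1,\dots,x_k)$ for the (random) position of the plurality winner. Replicator dynamics: given a probability distribution $F_0$ on $[0,1]$ (identified with its CDF) and an integer $k\ge 2$, set $F_{k,0}=F_0$, and for $t\ge 1$ let $F_{k,t}(x)=\Pr(\mathrm{plurality}(X_{1,t},\dots,X_{k,t})\le x)$, where $X_{1,t},\dots,X_{k,t}$ are i.i.d. with distribution $F_{k,t-1}$. $\mathcal F$ denotes the set of probability distributions on $[0,1]$ that are symmetric about $1/2$ and atomless (continuous CDF). *)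

theory Defs
  imports "HOL-Probability.Probability"
begin

text \<open>Candidate positions for k candidates are functions xs :: nat => real,
  only the values at indices i < k matter.  For distinct positions this is exactly the
  measure of the set of voters closer to candidate i than to any other candidate
  (ties between positions are voter sets of measure zero).\<close>
definition vote_share :: "nat \<Rightarrow> (nat \<Rightarrow> real) \<Rightarrow> nat \<Rightarrow> real" where
  "vote_share k xs i =
     measure lborel {v \<in> {0..1}. \<forall>j<k. xs j \<noteq> xs i \<longrightarrow> \<bar>v - xs i\<bar> < \<bar>v - xs j\<bar>}
       / real (card {j. j < k \<and> xs j = xs i})"

definition winners :: "nat \<Rightarrow> (nat \<Rightarrow> real) \<Rightarrow> nat set" where
  "winners k xs = {i. i < k \<and> (\<forall>j<k. vote_share k xs j \<le> vote_share k xs i)}"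

text \<open>One step of the replicator dynamics: draw k i.i.d. positions from M,
  the plurality winner (ties broken uniformly at random among winners) has position
  distributed according to the resulting measure.\<close>
definition plurality_step :: "nat \<Rightarrow> real measure \<Rightarrow> real measure" where
  "plurality_step k M =
     bind (PiM {..<k} (\<lambda>_. M))
          (\<lambda>xs. distr (measure_pmf (pmf_of_set (winners k xs))) borel xs)"

definition replicator :: "nat \<Rightarrow> real measure \<Rightarrow> nat \<Rightarrow> real measure" where
  "replicator k M0 t = (plurality_step k ^^ t) M0"

definition replicator_cdf :: "nat \<Rightarrow> real measure \<Rightarrow> nat \<Rightarrow> real \<Rightarrow> real" where
  "replicator_cdf k M0 t x = measure (replicator k M0 t) {..x}"

definition in_class_F :: "real measure \<Rightarrow> bool" where
  "in_class_F M \<longleftrightarrow> prob_space M \<and> sets M = sets borel \<and> measure M {0..1} = 1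
     \<and> distr M borel (\<lambda>x. 1 - x) = M \<and> (\<forall>x. measure M {x} = 0)"

end

theory Submission
  imports Defs
begin


definition Sv :: "(nat \<Rightarrow> real) \<Rightarrow> nat \<Rightarrow> real set" where
  "Sv xs i = {v \<in> {0..1}. \<forall>j<3. xs j \<noteq> xs i \<longrightarrow> \<bar>v - xs i\<bar> < \<bar>v - xs j\<bar>}"

lemma vote_share_Sv: "vote_share 3 xs i = measure lborel (Sv xs i) / real (card {j. j<3 \<and> xs j = xs i})"
  by (simp add: vote_share_def Sv_def)

lemma Sv_sets[measurable]: "Sv xs i \<in> sets borel"
proof -
  have "Sv xs i = {0..1} \<inter> {v \<in> space borel. \<forall>j<3. xs j \<noteq> xs i \<longrightarrow> \<bar>v - xs i\<bar> < \<bar>v - xs j\<bar>}"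
    by (auto simp: Sv_def)
  also have "\<dots> \<in> sets borel" by measurable
  finally show ?thesis .
qed

lemma Sv_sub: "Sv xs i \<subseteq> {0..1}" by (auto simp: Sv_def)

lemma I01_fmeas: "{0..1::real} \<in> fmeasurable lborel"
  by (simp add: fmeasurable_def)


lemma Sv_fmeas: "Sv xs i \<in> fmeasurable lborel"
  by (rule fmeasurableI2[OF I01_fmeas]) (auto simp: Sv_sub)

lemma Sv_le1: "measure lborel (Sv xs i) \<le> 1"
proof -
  have "measure lborel (Sv xs i) \<le> measure lborel {0..1::real}"
    by (rule measure_mono_fmeasurable[OF Sv_sub]) (auto intro: I01_fmeas)
  thus ?thesis by simp
qed

lemma Sv_disj: "xs i \<noteq> xs j \<Longrightarrow> i < 3 \<Longrightarrow> j < 3 \<Longrightarrow> Sv xs i \<inter> Sv xs j = {}"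
proof (rule ccontr)
  assume a: "xs i \<noteq> xs j" "i < 3" "j < 3" "Sv xs i \<inter> Sv xs j \<noteq> {}"
  then obtain v where "v \<in> Sv xs i" "v \<in> Sv xs j" by blast
  hence "\<bar>v - xs i\<bar> < \<bar>v - xs j\<bar>" "\<bar>v - xs j\<bar> < \<bar>v - xs i\<bar>" using a by (auto simp: Sv_def)
  thus False by linarith
qed

lemma card_eq_ge1: "(i::nat) < 3 \<Longrightarrow> card {j. j<3 \<and> (xs::nat\<Rightarrow>real) j = xs i} \<ge> 1"
proof -
  assume "i<3"
  hence "i \<in> {j. j<3 \<and> xs j = xs i}" by auto
  moreover have "finite {j. j<3 \<and> xs j = (xs i::real)}" by auto
  ultimately show ?thesis by (metis One_nat_def Suc_leI card_gt_0_iff empty_iff)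
qed

lemma vs_le: "vote_share 3 xs i \<le> measure lborel (Sv xs i)"
proof -
  define c where "c = real (card {j. j<3 \<and> xs j = xs i})"
  define m where "m = measure lborel (Sv xs i)"
  have e: "vote_share 3 xs i = m / c" unfolding vote_share_Sv c_def m_def ..
  have m0: "m \<ge> 0" unfolding m_def by simp
  have "c = 0 \<or> c \<ge> 1" unfolding c_def
    by (cases "card {j. j<3 \<and> xs j = xs i}") auto
  hence "m / c \<le> m"
  proof
    assume "c = 0" thus ?thesis using m0 by simp
  next
    assume "c \<ge> 1" thus ?thesis using m0
      by (simp add: divide_le_eq mult_le_cancel_left1 mult_le_cancel_left2)
  qed
  thus ?thesis using e m_def by simp
qed

lemma vs_unique: assumes "i<3" "\<forall>j<3. j \<noteq> i \<longrightarrow> xs j \<noteq> xs i"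
  shows "vote_share 3 xs i = measure lborel (Sv xs i)"
proof -
  have "{j. j<3 \<and> xs j = xs i} = {i}" using assms by auto
  thus ?thesis by (simp add: vote_share_Sv)
qed

lemma winners_sub: "winners 3 xs \<subseteq> {..<3}" by (auto simp: winners_def)

lemma winners_ne: "winners 3 xs \<noteq> {}"
proof -
  let ?f = "vote_share 3 xs"
  have "\<exists>i<3. \<forall>j<3. ?f j \<le> ?f i"
  proof (cases "?f 0 \<ge> ?f 1 \<and> ?f 0 \<ge> ?f 2")
    case True thus ?thesis by (intro exI[of _ 0]) (auto simp: less_Suc_eq numeral_3_eq_3 numeral_2_eq_2)
  next
    case False
    show ?thesis
    proof (cases "?f 1 \<ge> ?f 2")
      case True thus ?thesis using False by (intro exI[of _ 1]) (auto simp: less_Suc_eq numeral_3_eq_3 numeral_2_eq_2)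
    next
      case F2: False thus ?thesis using False by (intro exI[of _ 2]) (auto simp: less_Suc_eq numeral_3_eq_3 numeral_2_eq_2)
    qed
  qed
  thus ?thesis by (auto simp: winners_def)
qed

lemma winners_fin: "finite (winners 3 xs)"
  using winners_sub finite_subset by blast

lemma dominant:
  assumes "i<3" "\<forall>j<3. j \<noteq> i \<longrightarrow> xs j \<noteq> xs i" "measure lborel (Sv xs i) > 1/2"
  shows "winners 3 xs = {i}"
proof -
  have vi: "vote_share 3 xs i = measure lborel (Sv xs i)" using vs_unique assms by blast
  have "vote_share 3 xs j < vote_share 3 xs i" if "j<3" "j\<noteq>i" for j
  proof -
    have "Sv xs j \<subseteq> {0..1} - Sv xs i" using Sv_disj[of xs j i] Sv_sub[of xs j] assms that by auto
    hence "measure lborel (Sv xs j) \<le> measure lborel ({0..1} - Sv xs i)"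
      by (intro measure_mono_fmeasurable) (auto intro: fmeasurableI2[OF I01_fmeas])
    also have "\<dots> = 1 - measure lborel (Sv xs i)"
      by (subst measure_Diff) (auto simp: Sv_sub)
    finally show ?thesis using vs_le[of xs j] vi assms by linarith
  qed
  thus ?thesis using assms(1) vi by (force simp: winners_def)
qed


lemma Sv_lower: assumes "{h<..1} \<subseteq> Sv xs i" "0 \<le> h" "h \<le> 1"
  shows "measure lborel (Sv xs i) \<ge> 1 - h"
proof -
  have "measure lborel {h<..1} \<le> measure lborel (Sv xs i)"
    by (rule measure_mono_fmeasurable[OF assms(1)]) (auto intro: Sv_fmeas)
  thus ?thesis using assms by simp
qed

lemma Sv_lower': assumes "{0..<h} \<subseteq> Sv xs i" "0 \<le> h" "h \<le> 1"
  shows "measure lborel (Sv xs i) \<ge> h"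
proof -
  have "measure lborel {0..<h} \<le> measure lborel (Sv xs i)"
    by (rule measure_mono_fmeasurable[OF assms(1)]) (auto intro: Sv_fmeas)
  thus ?thesis using assms by simp
qed

lemma Sv_upper: assumes "Sv xs i \<subseteq> {0..h}" "0 \<le> h"
  shows "measure lborel (Sv xs i) \<le> h"
proof -
  have "measure lborel (Sv xs i) \<le> measure lborel {0..h}"
    by (rule measure_mono_fmeasurable[OF assms(1)]) (use assms in \<open>auto simp: fmeasurable_def\<close>)
  thus ?thesis using assms by simp
qed

lemma LLM:
  assumes i: "i<3" and L: "\<forall>l<3. l \<noteq> i \<longrightarrow> xs l \<le> x" and "x < xs i" "xs i < 1 - x"
    and B: "\<forall>l<3. 0 \<le> xs l \<and> xs l \<le> 1"
  shows "winners 3 xs = {i}"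
proof -
  define l where "l = (if i = 0 then 1 else (0::nat))"
  have l: "l<3" "l \<noteq> i" unfolding l_def by auto
  hence x0: "0 \<le> x" using L B by force
  define h where "h = (x + xs i)/2"
  have sub: "{h<..1} \<subseteq> Sv xs i"
  proof
    fix v assume v: "v \<in> {h<..1}"
    have "\<bar>v - xs i\<bar> < \<bar>v - xs j\<bar>" if "j<3" "xs j \<noteq> xs i" for j
    proof -
      have "j \<noteq> i" using that by auto
      hence "xs j \<le> x" using L that by auto
      thus ?thesis using v assms unfolding h_def by (auto simp: abs_if)
    qed
    thus "v \<in> Sv xs i" using v x0 assms unfolding Sv_def h_def by auto
  qed
  have "measure lborel (Sv xs i) \<ge> 1 - h"
    by (rule Sv_lower[OF sub]) (use x0 assms in \<open>auto simp: h_def\<close>)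
  moreover have "1 - h > 1/2" using assms unfolding h_def by simp
  ultimately have "measure lborel (Sv xs i) > 1/2" by linarith
  moreover have "\<forall>j<3. j \<noteq> i \<longrightarrow> xs j \<noteq> xs i" using L assms by force
  ultimately show ?thesis using dominant i by blast
qed

lemma LMM:
  assumes "i<3" "j<3" "k<3" "i\<noteq>j" "i\<noteq>k" "j\<noteq>k" and I: "\<forall>l<3. l = i \<or> l = j \<or> l = k"
    and B: "\<forall>l<3. 0 \<le> xs l \<and> xs l \<le> 1"
    and "xs i \<le> x" "x < xs j" "xs j < xs k" "xs k < 1 - x" "xs j \<le> 1/2"
  shows "i \<notin> winners 3 xs"
proof
  assume w: "i \<in> winners 3 xs"
  have B': "0 \<le> xs i" "xs k \<le> 1" "0 \<le> xs j" "0 \<le> xs k" using B assms by auto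
  have sub1: "Sv xs i \<subseteq> {0..(xs i + xs j)/2}"
  proof
    fix v assume v: "v \<in> Sv xs i"
    hence "\<bar>v - xs i\<bar> < \<bar>v - xs j\<bar>" "0 \<le> v" using assms by (auto simp: Sv_def)
    thus "v \<in> {0..(xs i + xs j)/2}" using assms by (auto simp: abs_if split: if_splits)
  qed
  have "0 \<le> (xs i + xs j)/2" using B' by simp
  hence v1: "vote_share 3 xs i \<le> (xs i + xs j)/2"
    using vs_le[of xs i] Sv_upper[OF sub1] by linarith
  have sub2: "{(xs j + xs k)/2<..1} \<subseteq> Sv xs k"
  proof
    fix v assume v: "v \<in> {(xs j + xs k)/2<..1}"
    have "\<bar>v - xs k\<bar> < \<bar>v - xs l\<bar>" if "l<3" "xs l \<noteq> xs k" for l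
    proof -
      have "l = i \<or> l = j" using I that by auto
      hence "xs l \<le> xs j" using assms by auto
      thus ?thesis using v assms by (auto simp: abs_if)
    qed
    thus "v \<in> Sv xs k" using v B' unfolding Sv_def by auto
  qed
  have u: "\<forall>l<3. l \<noteq> k \<longrightarrow> xs l \<noteq> xs k" using I assms by force
  have v2: "vote_share 3 xs k \<ge> 1 - (xs j + xs k)/2"
    using vs_unique[OF \<open>k<3\<close> u] Sv_lower[OF sub2] B' assms by simp
  have "vote_share 3 xs k \<le> vote_share 3 xs i" using w \<open>k<3\<close> by (auto simp: winners_def)
  hence "(xs i + xs j)/2 \<ge> 1 - (xs j + xs k)/2" using v1 v2 by linarith
  thus False using \<open>xs i \<le> x\<close> \<open>xs j \<le> 1/2\<close> \<open>xs k < 1 - x\<close> by argo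
qed

lemma lborel_refl: "distr lborel borel (\<lambda>v::real. 1 - v) = lborel"
proof -
  have "distr lborel borel (\<lambda>v::real. 1 - v) = distr (distr lborel borel uminus) borel ((+) (1::real))"
    by (subst distr_distr) (auto simp: comp_def)
  also have "\<dots> = lborel" by (simp add: lborel_distr_uminus lborel_distr_plus)
  finally show ?thesis .
qed

lemma Sv_refl: "Sv (\<lambda>l. 1 - xs l) i = (\<lambda>v. 1 - v) -` Sv xs i"
  unfolding Sv_def by (auto simp: abs_minus_commute)

lemma vs_refl: "vote_share 3 (\<lambda>l. 1 - xs l) i = vote_share 3 xs i"
proof -
  have "measure lborel (Sv (\<lambda>l. 1 - xs l) i) = measure lborel ((\<lambda>v. 1 - v) -` Sv xs i \<inter> space lborel)"
    by (simp add: Sv_refl)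
  also have "\<dots> = measure (distr lborel borel (\<lambda>v::real. 1 - v)) (Sv xs i)"
    by (rule measure_distr[symmetric]) auto
  also have "\<dots> = measure lborel (Sv xs i)" by (simp add: lborel_refl)
  finally show ?thesis unfolding vote_share_Sv by simp
qed

lemma winners_refl: "winners 3 (\<lambda>l. 1 - xs l) = winners 3 xs"
  unfolding winners_def vs_refl ..

lemma RRM:
  assumes i: "i<3" and L: "\<forall>l<3. l \<noteq> i \<longrightarrow> xs l \<ge> 1 - x" and "x < xs i" "xs i < 1 - x"
    and B: "\<forall>l<3. 0 \<le> xs l \<and> xs l \<le> 1"
  shows "winners 3 xs = {i}"
proof -
  have "winners 3 (\<lambda>l. 1 - xs l) = {i}" by (rule LLM) (use assms in auto)
  thus ?thesis by (simp add: winners_refl)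
qed

lemma RMM:
  assumes "i<3" "j<3" "k<3" "i\<noteq>j" "i\<noteq>k" "j\<noteq>k" and I: "\<forall>l<3. l = i \<or> l = j \<or> l = k"
    and B: "\<forall>l<3. 0 \<le> xs l \<and> xs l \<le> 1"
    and "xs i \<ge> 1 - x" "x < xs k" "xs k < xs j" "xs j < 1 - x" "xs j \<ge> 1/2"
  shows "i \<notin> winners 3 xs"
proof -
  have "i \<notin> winners 3 (\<lambda>l. 1 - xs l)" by (rule LMM[of i j k]) (use assms in auto)
  thus ?thesis by (simp add: winners_refl)
qed




definition ty :: "real \<Rightarrow> real \<Rightarrow> nat" where
  "ty x y = (if y \<le> x then 0 else if y \<le> 1/2 then 1 else if y < 1 - x then 2 else 3)"

definition cnt :: "nat \<Rightarrow> nat \<times> nat \<times> nat \<Rightarrow> nat" where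
  "cnt n t = (case t of (a,b,c) \<Rightarrow> of_bool (a=n) + of_bool (b=n) + of_bool (c=n))"

definition good :: "nat \<times> nat \<times> nat \<Rightarrow> bool" where
  "good t = ((cnt 0 t = 0 \<and> cnt 3 t = 0) \<or> (cnt 0 t = 2 \<and> cnt 3 t = 0) \<or> (cnt 3 t = 2 \<and> cnt 0 t = 0)
     \<or> (cnt 0 t = 1 \<and> cnt 3 t = 0 \<and> cnt 2 t \<le> 1) \<or> (cnt 3 t = 1 \<and> cnt 0 t = 0 \<and> cnt 1 t \<le> 1))"

lemma good_swap: "good (a,b,c) = good (b,a,c)"
  unfolding good_def cnt_def by auto

lemma good_rot: "good (a,b,c) = good (c,a,b)"
  unfolding good_def cnt_def by auto

lemma ty_lt4: "ty x y < 4" by (simp add: ty_def)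

lemma ty_cases: "ty x y \<in> {0,1,2,3}" by (simp add: ty_def)

lemma good_L: assumes "good (0,b,c)" "b < 4" "c < 4"
  shows "(b = 0 \<and> (c = 1 \<or> c = 2)) \<or> (c = 0 \<and> (b = 1 \<or> b = 2)) \<or> ((b = 1 \<or> b = 2) \<and> (c = 1 \<or> c = 2) \<and> \<not> (b = 2 \<and> c = 2))"
proof -
  have "b \<in> {0,1,2,3}" "c \<in> {0,1,2,3}" using assms by auto
  thus ?thesis using assms(1) unfolding good_def cnt_def by auto
qed

lemma good_R: assumes "good (3,b,c)" "b < 4" "c < 4"
  shows "(b = 3 \<and> (c = 1 \<or> c = 2)) \<or> (c = 3 \<and> (b = 1 \<or> b = 2)) \<or> ((b = 1 \<or> b = 2) \<and> (c = 1 \<or> c = 2) \<and> \<not> (b = 1 \<and> c = 1))"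
proof -
  have "b \<in> {0,1,2,3}" "c \<in> {0,1,2,3}" using assms by auto
  thus ?thesis using assms(1) unfolding good_def cnt_def by auto
qed

lemma ty0: "ty x y = 0 \<longleftrightarrow> y \<le> x" by (simp add: ty_def)
lemma ty1: "x < 1/2 \<Longrightarrow> ty x y = 1 \<longleftrightarrow> x < y \<and> y \<le> 1/2" by (auto simp: ty_def)
lemma ty2: "x < 1/2 \<Longrightarrow> ty x y = 2 \<longleftrightarrow> 1/2 < y \<and> y < 1 - x" by (auto simp: ty_def)
lemma ty3: "x < 1/2 \<Longrightarrow> ty x y = 3 \<longleftrightarrow> 1 - x \<le> y" by (auto simp: ty_def)

lemma helper:
  assumes x: "x < 1/2" and ijk: "i<3" "j<3" "k<3" "i\<noteq>j" "i\<noteq>k" "j\<noteq>k" and I: "\<forall>l<3. l = i \<or> l = j \<or> l = k"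
    and B: "\<forall>l<3. 0 \<le> xs l \<and> xs l \<le> 1"
    and D: "xs i \<noteq> xs j" "xs i \<noteq> xs k" "xs j \<noteq> xs k"
    and G: "good (ty x (xs i), ty x (xs j), ty x (xs k))"
    and W: "i \<in> winners 3 xs"
  shows "x < xs i \<and> xs i < 1 - x"
proof (rule ccontr)
  assume nm: "\<not> (x < xs i \<and> xs i < 1 - x)"
  show False
  proof (cases "xs i \<le> x")
    case True
    hence t0: "ty x (xs i) = 0" by (simp add: ty0)
    from good_L[OF G[unfolded t0] ty_lt4 ty_lt4]
    consider "ty x (xs j) = 0" "ty x (xs k) = 1 \<or> ty x (xs k) = 2"
      | "ty x (xs k) = 0" "ty x (xs j) = 1 \<or> ty x (xs j) = 2"
      | "ty x (xs j) = 1 \<or> ty x (xs j) = 2" "ty x (xs k) = 1 \<or> ty x (xs k) = 2" "\<not> (ty x (xs j) = 2 \<and> ty x (xs k) = 2)"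
      by (metis (no_types))
    thus False
    proof cases
      case 1
      hence "xs j \<le> x" "x < xs k" "xs k < 1 - x" using ty0 ty1[OF x] ty2[OF x] x by auto
      hence "\<forall>l<3. l \<noteq> k \<longrightarrow> xs l \<le> x" using I True by blast
      hence "winners 3 xs = {k}" using LLM[of k xs x] ijk B \<open>x < xs k\<close> \<open>xs k < 1 - x\<close> by blast
      thus False using W ijk by auto
    next
      case 2
      hence "xs k \<le> x" "x < xs j" "xs j < 1 - x" using ty0 ty1[OF x] ty2[OF x] x by auto
      hence "\<forall>l<3. l \<noteq> j \<longrightarrow> xs l \<le> x" using I True by blast
      hence "winners 3 xs = {j}" using LLM[of j xs x] ijk B \<open>x < xs j\<close> \<open>xs j < 1 - x\<close> by blast
      thus False using W ijk by auto
    next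
      case 3
      hence m: "x < xs j" "xs j < 1 - x" "x < xs k" "xs k < 1 - x" "xs j \<le> 1/2 \<or> xs k \<le> 1/2"
        using ty1[OF x] ty2[OF x] x by auto
      show False
      proof (cases "xs j < xs k")
        case True
        hence "xs j \<le> 1/2" using m by auto
        thus False using LMM[of i j k xs x] ijk I B m True W \<open>xs i \<le> x\<close> by blast
      next
        case False
        hence "xs k < xs j" using D by auto
        hence "xs k \<le> 1/2" using m by auto
        thus False using LMM[of i k j xs x] ijk I B m \<open>xs k < xs j\<close> W \<open>xs i \<le> x\<close> by blast
      qed
    qed
  next
    case False
    hence Ri: "1 - x \<le> xs i" using nm by auto
    hence t3: "ty x (xs i) = 3" by (simp add: ty3[OF x])
    from good_R[OF G[unfolded t3] ty_lt4 ty_lt4]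
    consider "ty x (xs j) = 3" "ty x (xs k) = 1 \<or> ty x (xs k) = 2"
      | "ty x (xs k) = 3" "ty x (xs j) = 1 \<or> ty x (xs j) = 2"
      | "ty x (xs j) = 1 \<or> ty x (xs j) = 2" "ty x (xs k) = 1 \<or> ty x (xs k) = 2" "\<not> (ty x (xs j) = 1 \<and> ty x (xs k) = 1)"
      by (metis (no_types))
    thus False
    proof cases
      case 1
      hence "1 - x \<le> xs j" "x < xs k" "xs k < 1 - x" using ty3[OF x] ty1[OF x] ty2[OF x] x by auto
      hence "\<forall>l<3. l \<noteq> k \<longrightarrow> xs l \<ge> 1 - x" using I Ri by blast
      hence "winners 3 xs = {k}" using RRM[where i=k and xs=xs and x=x] ijk B \<open>x < xs k\<close> \<open>xs k < 1 - x\<close> by blast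
      thus False using W ijk by auto
    next
      case 2
      hence "1 - x \<le> xs k" "x < xs j" "xs j < 1 - x" using ty3[OF x] ty1[OF x] ty2[OF x] x by auto
      hence "\<forall>l<3. l \<noteq> j \<longrightarrow> xs l \<ge> 1 - x" using I Ri by blast
      hence "winners 3 xs = {j}" using RRM[where i=j and xs=xs and x=x] ijk B \<open>x < xs j\<close> \<open>xs j < 1 - x\<close> by blast
      thus False using W ijk by auto
    next
      case 3
      hence m: "x < xs j" "xs j < 1 - x" "x < xs k" "xs k < 1 - x" "xs j > 1/2 \<or> xs k > 1/2"
        using ty1[OF x] ty2[OF x] x by auto
      show False
      proof (cases "xs k < xs j")
        case True
        hence "xs j \<ge> 1/2" using m by auto
        thus False using RMM[where i=i and j=j and k=k and xs=xs and x=x] ijk I B m True W Ri by blast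
      next
        case False
        hence "xs j < xs k" using D by auto
        hence "xs k \<ge> 1/2" using m by auto
        thus False using RMM[where i=i and j=k and k=j and xs=xs and x=x] ijk I B m \<open>xs j < xs k\<close> W Ri by blast
      qed
    qed
  qed
qed

lemma good_mid:
  assumes x: "x < 1/2" and B: "\<forall>l<3. 0 \<le> xs l \<and> xs l \<le> 1"
    and D: "xs 0 \<noteq> xs 1" "xs 0 \<noteq> xs 2" "xs 1 \<noteq> xs 2"
    and G: "good (ty x (xs 0), ty x (xs 1), ty x (xs 2))"
    and W: "i \<in> winners 3 xs"
  shows "x < xs i \<and> xs i < 1 - x"
proof -
  have "i < 3" using W winners_sub by auto
  hence "i = 0 \<or> i = 1 \<or> i = 2" by auto
  moreover have I3: "\<forall>l<3. l = 0 \<or> l = 1 \<or> l = (2::nat)" by auto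
  ultimately show ?thesis
  proof (elim disjE)
    assume "i = 0" thus ?thesis using helper[OF x, of 0 1 2 xs] I3 B D G W by auto
  next
    assume "i = 1" thus ?thesis using helper[OF x, of 1 0 2 xs] I3 B D G W good_swap by auto
  next
    assume "i = 2" thus ?thesis using helper[OF x, of 2 0 1 xs] I3 B D G W good_rot by auto
  qed
qed




abbreviation PB :: "(nat \<Rightarrow> real) measure" where "PB \<equiv> PiM {..<3::nat} (\<lambda>_. borel)"

lemma comp_meas[measurable]: "(\<lambda>xs::nat\<Rightarrow>real. xs i) \<in> borel_measurable PB"
proof (cases "i < 3")
  case True thus ?thesis by (intro measurable_component_singleton) auto
next
  case False
  have "(\<lambda>xs::nat\<Rightarrow>real. undefined::real) \<in> borel_measurable PB" by simp
  moreover have "xs \<in> space PB \<Longrightarrow> xs i = undefined" for xs using False by (auto simp: space_PiM PiE_def extensional_def)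
  ultimately show ?thesis using measurable_cong[of PB "\<lambda>xs. xs i" "\<lambda>_. undefined" borel] by auto
qed

lemma Sv_meas[measurable]: "(\<lambda>xs. measure lborel (Sv xs i)) \<in> borel_measurable PB"
proof -
  define Q where "Q = {z \<in> space (PB \<Otimes>\<^sub>M lborel). snd z \<in> {0..1} \<and> (\<forall>j<3. fst z j \<noteq> fst z i \<longrightarrow> \<bar>snd z - fst z i\<bar> < \<bar>snd z - fst z j\<bar>)}"
  have "Q \<in> sets (PB \<Otimes>\<^sub>M lborel)" unfolding Q_def by measurable
  hence "(\<lambda>xs. emeasure lborel (Pair xs -` Q)) \<in> borel_measurable PB" by (rule lborel.measurable_emeasure_Pair)
  hence "(\<lambda>xs. enn2real (emeasure lborel (Pair xs -` Q))) \<in> borel_measurable PB" by measurable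
  moreover have "xs \<in> space PB \<Longrightarrow> Pair xs -` Q = Sv xs i" for xs
    unfolding Q_def Sv_def by (auto simp: space_pair_measure)
  ultimately show ?thesis
    using measurable_cong[of PB "\<lambda>xs. measure lborel (Sv xs i)" "\<lambda>xs. enn2real (emeasure lborel (Pair xs -` Q))" borel]
    by (auto simp: measure_def)
qed

lemma card_ind: "finite A \<Longrightarrow> real (card (A \<inter> B)) = (\<Sum>x\<in>A. indicator B x)"
proof -
  assume fin: "finite A"
  have "real (card (A \<inter> B)) = (\<Sum>x\<in>A\<inter>B. 1::real)" by (rule real_of_card)
  also have "\<dots> = (\<Sum>x\<in>A. if x \<in> B then 1 else 0)" by (rule sum.inter_restrict[OF fin])
  also have "\<dots> = (\<Sum>x\<in>A. indicator B x)" by (intro sum.cong) (auto simp: indicator_def)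
  finally show ?thesis .
qed

lemma card_sum: "real (card {j. j<3 \<and> (xs::nat\<Rightarrow>real) j = xs i}) = (\<Sum>j<3. if xs j = xs i then 1 else 0)"
proof -
  have "{j. j<3 \<and> xs j = xs i} = {..<3} \<inter> {j. xs j = xs i}" by auto
  hence "real (card {j. j<3 \<and> xs j = xs i}) = real (card ({..<3} \<inter> {j. xs j = xs i}))" by simp
  also have "\<dots> = (\<Sum>j<3. indicator {j. xs j = xs i} j)" by (rule card_ind) auto
  also have "\<dots> = (\<Sum>j<3. if xs j = xs i then 1 else 0)" by (intro sum.cong) (auto simp: indicator_def)
  finally show ?thesis .
qed

lemma vs_meas[measurable]: "(\<lambda>xs. vote_share 3 xs i) \<in> borel_measurable PB"
  unfolding vote_share_Sv card_sum by measurable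

lemma winners_eq_iff:
  assumes S: "S \<subseteq> {..<3}"
  shows "winners 3 xs = S \<longleftrightarrow> (\<forall>l<3. l \<in> S \<longleftrightarrow> (\<forall>j<3. vote_share 3 xs j \<le> vote_share 3 xs l))"
proof
  assume "winners 3 xs = S" thus "\<forall>l<3. l \<in> S \<longleftrightarrow> (\<forall>j<3. vote_share 3 xs j \<le> vote_share 3 xs l)"
    unfolding winners_def by blast
next
  assume H: "\<forall>l<3. l \<in> S \<longleftrightarrow> (\<forall>j<3. vote_share 3 xs j \<le> vote_share 3 xs l)"
  show "winners 3 xs = S"
  proof (rule set_eqI)
    fix l show "l \<in> winners 3 xs \<longleftrightarrow> l \<in> S"
    proof (cases "l < 3")
      case True thus ?thesis using H unfolding winners_def by blast
    next
      case False thus ?thesis using S unfolding winners_def by auto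
    qed
  qed
qed

lemma winners_meas: "winners 3 \<in> measurable PB (count_space (Pow {..<3}))"
proof (rule measurable_count_space_eq2[THEN iffD2], rule finite_Pow_iff[THEN iffD2], simp, rule conjI)
  show "winners 3 \<in> space PB \<rightarrow> Pow {..<3}" using winners_sub by auto
next
  show "\<forall>S\<in>Pow {..<3}. winners 3 -` {S} \<inter> space PB \<in> sets PB"
  proof
  fix S :: "nat set" assume S: "S \<in> Pow {..<3}"
  have "winners 3 -` {S} \<inter> space PB = {xs \<in> space PB. \<forall>l<3. (l \<in> S \<longleftrightarrow> (\<forall>j<3. vote_share 3 xs j \<le> vote_share 3 xs l))}"
    using S winners_eq_iff[of S] by blast
  also have "\<dots> \<in> sets PB"
  proof -
    have p1: "Measurable.pred PB (\<lambda>xs. vote_share 3 xs j \<le> vote_share 3 xs l)" for j l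
      unfolding pred_def by (intro borel_measurable_le vs_meas)
    have p2: "Measurable.pred PB (\<lambda>xs. \<forall>j. j < 3 \<longrightarrow> vote_share 3 xs j \<le> vote_share 3 xs l)" for l
    proof (rule pred_intros_countable(1))
      fix j
      show "Measurable.pred PB (\<lambda>xs. j < 3 \<longrightarrow> vote_share 3 xs j \<le> vote_share 3 xs l)"
        by (rule pred_intros_logic(4)[OF measurable_const p1]) simp
    qed
    have p3: "Measurable.pred PB (\<lambda>xs. l \<in> S \<longleftrightarrow> (\<forall>j. j < 3 \<longrightarrow> vote_share 3 xs j \<le> vote_share 3 xs l))" for l
    proof (cases "l \<in> S")
      case True
      hence "(\<lambda>xs. l \<in> S \<longleftrightarrow> (\<forall>j. j < 3 \<longrightarrow> vote_share 3 xs j \<le> vote_share 3 xs l)) = (\<lambda>xs. (\<forall>j. j < 3 \<longrightarrow> vote_share 3 xs j \<le> vote_share 3 xs l))" by simp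
      thus ?thesis using p2[of l] by (simp only:)
    next
      case False
      hence "(\<lambda>xs. l \<in> S \<longleftrightarrow> (\<forall>j. j < 3 \<longrightarrow> vote_share 3 xs j \<le> vote_share 3 xs l)) = (\<lambda>xs. \<not> (\<forall>j. j < 3 \<longrightarrow> vote_share 3 xs j \<le> vote_share 3 xs l))" by simp
      thus ?thesis using pred_intros_logic(2)[OF p2[of l]] by (simp only:)
    qed
    have "Measurable.pred PB (\<lambda>xs. \<forall>l. l < 3 \<longrightarrow> (l \<in> S \<longleftrightarrow> (\<forall>j. j < 3 \<longrightarrow> vote_share 3 xs j \<le> vote_share 3 xs l)))"
    proof (rule pred_intros_countable(1))
      fix l
      show "Measurable.pred PB (\<lambda>xs. l < 3 \<longrightarrow> (l \<in> S \<longleftrightarrow> (\<forall>j. j < 3 \<longrightarrow> vote_share 3 xs j \<le> vote_share 3 xs l)))"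
        by (rule pred_intros_logic(4)[OF measurable_const p3]) simp
    qed
    thus ?thesis unfolding pred_def .
  qed
  finally show "winners 3 -` {S} \<inter> space PB \<in> sets PB" .
  qed
qed

definition Kr :: "(nat \<Rightarrow> real) \<Rightarrow> real measure" where
  "Kr xs = distr (measure_pmf (pmf_of_set (winners 3 xs))) borel xs"

lemma Kr_prob: "prob_space (Kr xs)"
  unfolding Kr_def by (rule prob_space.prob_space_distr) (auto simp: prob_space_measure_pmf)

lemma Kr_sets[simp]: "sets (Kr xs) = sets borel"
  unfolding Kr_def by simp

lemma Kr_emeasure: "A \<in> sets borel \<Longrightarrow> emeasure (Kr xs) A = emeasure (measure_pmf (pmf_of_set (winners 3 xs))) {l. xs l \<in> A}"
  unfolding Kr_def by (subst emeasure_distr) (auto simp: vimage_def)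

lemma Kr_measure: "A \<in> sets borel \<Longrightarrow> measure (Kr xs) A = real (card (winners 3 xs \<inter> {l. xs l \<in> A})) / real (card (winners 3 xs))"
  unfolding Kr_def by (subst measure_distr) (auto simp: vimage_def measure_pmf_of_set winners_ne winners_fin)

lemma Kr_measure_sum: "A \<in> sets borel \<Longrightarrow> measure (Kr xs) A = (\<Sum>l\<in>winners 3 xs. indicator A (xs l)) / real (card (winners 3 xs))"
proof -
  assume A: "A \<in> sets borel"
  have "(\<Sum>l\<in>winners 3 xs. indicator A (xs l)) = (\<Sum>l\<in>winners 3 xs. indicator {l. xs l \<in> A} l :: real)"
    by (auto simp: indicator_def)
  also have "\<dots> = real (card (winners 3 xs \<inter> {l. xs l \<in> A}))"
    by (subst card_ind) (auto simp: winners_fin)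
  finally show ?thesis using Kr_measure[OF A] by simp
qed

lemma Kr_meas_PB: "Kr \<in> measurable PB (subprob_algebra borel)"
proof (rule measurable_subprob_algebra)
  fix xs show "subprob_space (Kr xs)" using Kr_prob prob_space_imp_subprob_space by blast
next
  fix xs show "sets (Kr xs) = sets borel" by simp
next
  fix A :: "real set" assume A: "A \<in> sets borel"
  interpret pk: prob_space "Kr xs" for xs by (rule Kr_prob)
  have "(\<lambda>xs. (\<lambda>S xs. (\<Sum>l\<in>S. indicator A (xs l)) / real (card S)) (winners 3 xs) xs) \<in> borel_measurable PB"
    by (rule measurable_compose_countable'[OF _ winners_meas]) (use A in \<open>auto intro: countable_finite\<close>)
  hence "(\<lambda>xs. measure (Kr xs) A) \<in> borel_measurable PB"
    by (simp add: Kr_measure_sum[OF A])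
  hence "(\<lambda>xs. ennreal (measure (Kr xs) A)) \<in> borel_measurable PB" by (rule measurable_compose[OF _ measurable_ennreal])
  thus "(\<lambda>xs. emeasure (Kr xs) A) \<in> borel_measurable PB"
    by (simp add: pk.emeasure_eq_measure)
qed




locale cF = fixes \<mu> :: "real measure" assumes cF: "in_class_F \<mu>"
begin

abbreviation P where "P \<equiv> PiM {..<3::nat} (\<lambda>_. \<mu>)"

lemma mu_prob: "prob_space \<mu>" using cF by (simp add: in_class_F_def)
lemma mu_sets[simp, measurable_cong]: "sets \<mu> = sets borel" using cF by (simp add: in_class_F_def)
lemma mu_space[simp]: "space \<mu> = UNIV" using sets_eq_imp_space_eq[OF mu_sets] by simp
lemma mu_01: "measure \<mu> {0..1} = 1" using cF by (simp add: in_class_F_def)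
lemma mu_sym: "distr \<mu> borel (\<lambda>x. 1 - x) = \<mu>" using cF by (simp add: in_class_F_def)
lemma mu_atom: "measure \<mu> {y} = 0" using cF by (simp add: in_class_F_def)

sublocale mu: prob_space \<mu> by (rule mu_prob)

lemma pps: "product_prob_space (\<lambda>_::nat. \<mu>)" by (rule product_prob_spaceI) (rule mu_prob)

sublocale fp: finite_product_prob_space "\<lambda>_::nat. \<mu>" "{..<3::nat}"
proof -
  interpret pp: product_prob_space "\<lambda>_::nat. \<mu>" by (rule pps)
  show "finite_product_prob_space (\<lambda>_::nat. \<mu>) {..<3::nat}"
    by unfold_locales auto
qed

lemma P_sets: "sets P = sets PB" by (rule sets_PiM_cong) auto
lemma P_space: "space P = space PB" by (rule sets_eq_imp_space_eq[OF P_sets])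
lemma P_space_eq: "space P = PiE {..<3} (\<lambda>_. UNIV)" by (simp add: space_PiM)
lemma P_ne: "space P \<noteq> {}" unfolding P_space_eq by (simp add: PiE_eq_empty_iff)

lemma Kr_meas: "Kr \<in> measurable P (subprob_algebra borel)"
  unfolding measurable_cong_sets[OF P_sets refl, of "subprob_algebra borel"] by (rule Kr_meas_PB)

lemma comp_meas_P: "(\<lambda>xs::nat\<Rightarrow>real. xs i) \<in> borel_measurable P"
  unfolding measurable_cong_sets[OF P_sets refl, of borel] by (rule comp_meas)

lemma box: assumes "\<And>l. l < 3 \<Longrightarrow> A l \<in> sets borel"
  shows "measure P (PiE {..<3} A) = (\<Prod>l<3. measure \<mu> (A l))"
  using fp.prob_times[of A] assms by simp

lemma box_sets: assumes "\<And>l. l < 3 \<Longrightarrow> A l \<in> sets borel"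
  shows "PiE {..<3} A \<in> sets P"
  by (rule sets_PiM_I_finite) (use assms in auto)

lemma AE_01: "AE xs in P. \<forall>l<3. xs l \<in> {0..1}"
proof -
  have "measure P (PiE {..<3} (\<lambda>_. {0..1})) = (\<Prod>l<(3::nat). measure \<mu> {0..1::real})"
    by (rule box) auto
  also have "\<dots> = 1" by (simp add: mu_01)
  finally have "measure P (PiE {..<3} (\<lambda>_. {0..1})) = 1" .
  hence "AE xs in P. xs \<in> PiE {..<3} (\<lambda>_. {0..1::real})" by (rule fp.AE_prob_1)
  thus ?thesis by (rule eventually_mono) (auto simp: PiE_iff)
qed

lemma AE_avoid: assumes True: "l < 3" shows "AE xs in P. xs l \<noteq> y"
proof -
  define B where "B = PiE {..<3} (\<lambda>i. if i = l then {y} else (UNIV::real set))"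
  have Bs: "B \<in> sets P" unfolding B_def by (rule box_sets) auto
  have "measure P B = (\<Prod>i<(3::nat). measure \<mu> (if i = l then {y} else UNIV))"
    unfolding B_def by (rule box) auto
  also have "\<dots> = 0"
  proof (rule prod_zero)
    show "\<exists>a\<in>{..<3}. measure \<mu> (if a = l then {y} else UNIV) = 0"
      by (rule bexI[of _ l]) (simp_all add: mu_atom True)
  qed simp
  finally have m0: "measure P B = 0" .
  have "B \<in> null_sets P"
  proof (rule null_setsI)
    show "emeasure P B = 0" using m0 fp.emeasure_eq_measure[of B] by (metis ennreal_0)
  qed (rule Bs)
  moreover have "{xs \<in> space P. \<not> xs l \<noteq> y} \<subseteq> B"
  proof
    fix xs assume "xs \<in> {xs \<in> space P. \<not> xs l \<noteq> y}"
    hence xs: "xs \<in> space P" "xs l = y" by auto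
    hence "xs \<in> extensional {..<3}" unfolding P_space_eq by (simp add: PiE_iff)
    thus "xs \<in> B" unfolding B_def PiE_iff using xs(2) by simp
  qed
  ultimately show ?thesis by (rule AE_I')
qed

lemma AE_tie: assumes jk: "j < 3" "k < 3" "j \<noteq> k" shows "AE xs in P. xs j \<noteq> xs k"
proof -
  define E where "E = {xs \<in> space P. xs j = xs k}"
  have Es: "E \<in> sets P" unfolding E_def by (intro borel_measurable_eq comp_meas_P)
  define I' where "I' = {..<3::nat} - {k}"
  have ins: "{..<3::nat} = insert k I'" "k \<notin> I'" "finite I'" using jk unfolding I'_def by auto
  have Peq: "P = PiM (insert k I') (\<lambda>_. \<mu>)" by (simp only: ins(1))
  have "emeasure P E = (\<integral>\<^sup>+ xs. indicator E xs \<partial>P)" using Es by simp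
  also have "\<dots> = (\<integral>\<^sup>+ x. (\<integral>\<^sup>+ y. indicator E (x(k := y)) \<partial>\<mu>) \<partial>PiM I' (\<lambda>_. \<mu>))"
    unfolding Peq
  proof (rule fp.product_nn_integral_insert[OF ins(3) ins(2)])
    show "indicator E \<in> borel_measurable (PiM (insert k I') (\<lambda>_. \<mu>))"
      using Es unfolding Peq by (rule borel_measurable_indicator)
  qed
  also have "\<dots> = (\<integral>\<^sup>+ x. 0 \<partial>PiM I' (\<lambda>_. \<mu>))"
  proof (rule nn_integral_cong)
    fix x assume x: "x \<in> space (PiM I' (\<lambda>_. \<mu>))"
    have "(indicator E (x(k := y)) :: ennreal) = indicator {x j} y" for y :: real
    proof -
      have "x(k := y) \<in> space P"
        using x jk unfolding P_space_eq by (auto simp: space_PiM PiE_iff extensional_def I'_def)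
      moreover have "(x(k := y)) j = x j" "(x(k := y)) k = y" using jk by auto
      ultimately show ?thesis unfolding E_def indicator_def by auto
    qed
    hence "(\<integral>\<^sup>+ y. indicator E (x(k := y)) \<partial>\<mu>) = (\<integral>\<^sup>+ y. indicator {x j} y \<partial>\<mu>)"
      by (intro nn_integral_cong) (simp only:)
    also have "\<dots> = emeasure \<mu> {x j}" by (rule nn_integral_indicator) simp
    also have "\<dots> = 0" using mu_atom[of "x j"] by (simp add: mu.emeasure_eq_measure)
    finally show "(\<integral>\<^sup>+ y. indicator E (x(k := y)) \<partial>\<mu>) = 0" .
  qed
  also have "\<dots> = 0" by simp
  finally have "E \<in> null_sets P" using Es by (intro null_setsI)
  moreover have "{xs \<in> space P. \<not> xs j \<noteq> xs k} \<subseteq> E" unfolding E_def by blast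
  ultimately show ?thesis by (rule AE_I')
qed

lemma nu_prob: "prob_space (P \<bind> Kr)"
  by (rule fp.prob_space_bind[OF AE_I2[OF Kr_prob] Kr_meas])

lemma nu_sets: "sets (P \<bind> Kr) = sets borel"
  by (rule sets_bind[OF Kr_sets P_ne])

lemma nu_space: "space (P \<bind> Kr) = UNIV"
  using sets_eq_imp_space_eq[OF nu_sets] by simp

lemma nu_em: "emeasure (P \<bind> Kr) A = ennreal (measure (P \<bind> Kr) A)"
proof -
  interpret nu: prob_space "P \<bind> Kr" by (rule nu_prob)
  show ?thesis by (rule nu.emeasure_eq_measure)
qed

lemma nu_emeasure: "A \<in> sets borel \<Longrightarrow> emeasure (P \<bind> Kr) A = (\<integral>\<^sup>+ xs. emeasure (Kr xs) A \<partial>P)"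
  by (rule emeasure_bind[OF P_ne Kr_meas])

end

lemma Kr_space[simp]: "space (Kr xs) = UNIV"
  using sets_eq_imp_space_eq[OF Kr_sets[of xs]] by simp

lemma Kr_one: assumes "A \<in> sets borel" "\<forall>l\<in>winners 3 xs. xs l \<in> A"
  shows "emeasure (Kr xs) A = 1"
proof -
  have "winners 3 xs \<inter> {l. xs l \<in> A} = winners 3 xs" using assms by auto
  moreover have "card (winners 3 xs) \<noteq> 0" using winners_ne winners_fin by auto
  ultimately show ?thesis using assms(1)
    by (simp add: Kr_emeasure emeasure_pmf_of_set winners_ne winners_fin ennreal_divide_self)
qed

lemma Kr_zero: assumes "A \<in> sets borel" "\<forall>l\<in>winners 3 xs. xs l \<notin> A"
  shows "emeasure (Kr xs) A = 0"
proof -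
  have "winners 3 xs \<inter> {l. xs l \<in> A} = {}" using assms by auto
  thus ?thesis using assms(1)
    by (simp add: Kr_emeasure emeasure_pmf_of_set winners_ne winners_fin)
qed

lemma winners_cong: assumes "\<forall>l<3. xs l = ys l" shows "winners 3 xs = winners 3 ys"
proof -
  have "vote_share 3 xs i = vote_share 3 ys i" if "i < 3" for i
  proof -
    have "Sv xs i = Sv ys i" unfolding Sv_def using assms that by auto
    moreover have "{j. j<3 \<and> xs j = xs i} = {j. j<3 \<and> ys j = ys i}" using assms that by auto
    ultimately show ?thesis by (simp add: vote_share_Sv)
  qed
  thus ?thesis unfolding winners_def by auto
qed

context cF begin

lemma nu_01: "measure (P \<bind> Kr) {0..1} = 1"
proof -
  have "emeasure (P \<bind> Kr) {0..1} = (\<integral>\<^sup>+ xs. emeasure (Kr xs) {0..1} \<partial>P)" by (rule nu_emeasure) simp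
  also have "\<dots> = (\<integral>\<^sup>+ xs. 1 \<partial>P)"
  proof (rule nn_integral_cong_AE)
    show "AE xs in P. emeasure (Kr xs) {0..1} = 1"
      using AE_01
    proof (rule eventually_mono)
      fix xs :: "nat \<Rightarrow> real" assume a: "\<forall>l<3. xs l \<in> {0..1}"
      show "emeasure (Kr xs) {0..1} = 1"
      proof (rule Kr_one)
        show "\<forall>l\<in>winners 3 xs. xs l \<in> {0..1}" using a winners_sub[of xs] by auto
      qed simp
    qed
  qed
  also have "\<dots> = 1" by (simp add: fp.emeasure_space_1)
  finally show ?thesis using nu_em by simp
qed

lemma nu_atom: "measure (P \<bind> Kr) {y} = 0"
proof -
  have "emeasure (P \<bind> Kr) {y} = (\<integral>\<^sup>+ xs. emeasure (Kr xs) {y} \<partial>P)" by (rule nu_emeasure) simp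
  also have "\<dots> = (\<integral>\<^sup>+ xs. 0 \<partial>P)"
  proof (rule nn_integral_cong_AE)
    have a0: "AE xs in P. xs 0 \<noteq> y" by (rule AE_avoid) simp
    have a1: "AE xs in P. xs 1 \<noteq> y" by (rule AE_avoid) simp
    have a2: "AE xs in P. xs 2 \<noteq> y" by (rule AE_avoid) simp
    have "AE xs in P. xs 0 \<noteq> y \<and> xs 1 \<noteq> y \<and> xs 2 \<noteq> y"
      using a0 a1 a2 by eventually_elim auto
    thus "AE xs in P. emeasure (Kr xs) {y} = 0"
    proof (rule eventually_mono)
      fix xs :: "nat \<Rightarrow> real" assume a: "xs 0 \<noteq> y \<and> xs 1 \<noteq> y \<and> xs 2 \<noteq> y"
      have "\<forall>l\<in>winners 3 xs. xs l \<notin> {y}"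
      proof
        fix l assume "l \<in> winners 3 xs"
        hence "l = 0 \<or> l = 1 \<or> l = 2" using winners_sub by fastforce
        thus "xs l \<notin> {y}" using a by auto
      qed
      thus "emeasure (Kr xs) {y} = 0" by (intro Kr_zero) auto
    qed
  qed
  also have "\<dots> = 0" by simp
  finally show ?thesis using nu_em by simp
qed

definition R :: "(nat \<Rightarrow> real) \<Rightarrow> (nat \<Rightarrow> real)" where "R = compose {..<3} (\<lambda>x. 1 - x)"

lemma refl_meas_mu: "(\<lambda>x::real. 1 - x) \<in> measurable \<mu> \<mu>"
  unfolding measurable_cong_sets[OF mu_sets mu_sets] by simp

lemma R_meas: "R \<in> measurable P P"
  unfolding R_def compose_def
proof (rule measurable_restrict)
  fix i :: nat assume i: "i \<in> {..<3}"
  show "(\<lambda>xs. 1 - xs i) \<in> measurable P \<mu>"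
    using measurable_compose[OF measurable_component_singleton[OF i, of "\<lambda>_. \<mu>"] refl_meas_mu] .
qed

lemma distr_R: "distr P P R = P"
proof -
  have "distr P P R = PiM {..<3} (\<lambda>i. distr \<mu> \<mu> (\<lambda>x. 1 - x))"
    unfolding R_def by (rule distr_PiM_finite_prob_space[OF _ pps pps refl_meas_mu]) simp
  also have "distr \<mu> \<mu> (\<lambda>x. 1 - x) = distr \<mu> borel (\<lambda>x. 1 - x)" by (rule distr_cong) auto
  also have "\<dots> = \<mu>" by (rule mu_sym)
  finally show ?thesis .
qed

lemma Kr_distr: assumes "xs \<in> space P" shows "distr (Kr xs) borel (\<lambda>x. 1 - x) = Kr (R xs)"
proof (rule measure_eqI)
  show "sets (distr (Kr xs) borel (\<lambda>x. 1 - x)) = sets (Kr (R xs))" by simp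
next
  fix A assume "A \<in> sets (distr (Kr xs) borel (\<lambda>x::real. 1 - x))"
  hence A: "A \<in> sets borel" by simp
  have Rl: "R xs l = 1 - xs l" if "l < 3" for l using that by (simp add: R_def compose_def)
  have W: "winners 3 (R xs) = winners 3 xs"
  proof -
    have "winners 3 (R xs) = winners 3 (\<lambda>l. 1 - xs l)" by (rule winners_cong) (simp add: Rl)
    thus ?thesis by (simp add: winners_refl)
  qed
  have "emeasure (distr (Kr xs) borel (\<lambda>x. 1 - x)) A = emeasure (Kr xs) ((\<lambda>x. 1 - x) -` A)"
    using A by (subst emeasure_distr) (auto simp: Kr_space measurable_cong_sets[OF Kr_sets refl])
  also have "\<dots> = emeasure (measure_pmf (pmf_of_set (winners 3 xs))) {l. 1 - xs l \<in> A}"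
  proof -
    have "(\<lambda>x::real. 1 - x) -` A \<in> sets borel" by (rule measurable_sets_borel[OF _ A]) simp
    thus ?thesis by (subst Kr_emeasure) auto
  qed
  also have "\<dots> = emeasure (measure_pmf (pmf_of_set (winners 3 (R xs)))) {l. R xs l \<in> A}"
  proof -
    have "winners 3 xs \<inter> {l. 1 - xs l \<in> A} = winners 3 xs \<inter> {l. R xs l \<in> A}"
      using winners_sub[of xs] Rl by auto
    thus ?thesis unfolding W by (simp add: emeasure_pmf_of_set winners_ne winners_fin)
  qed
  also have "\<dots> = emeasure (Kr (R xs)) A" using A by (subst Kr_emeasure) auto
  finally show "emeasure (distr (Kr xs) borel (\<lambda>x. 1 - x)) A = emeasure (Kr (R xs)) A" .
qed

lemma nu_sym: "distr (P \<bind> Kr) borel (\<lambda>x. 1 - x) = P \<bind> Kr"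
proof -
  have "distr (P \<bind> Kr) borel (\<lambda>x::real. 1 - x) = P \<bind> (\<lambda>xs. distr (Kr xs) borel (\<lambda>x. 1 - x))"
    by (rule distr_bind[OF Kr_meas P_ne]) simp
  also have "\<dots> = P \<bind> (\<lambda>xs. Kr (R xs))" by (rule bind_cong) (auto simp: Kr_distr)
  also have "\<dots> = distr P P R \<bind> Kr" by (rule bind_distr[symmetric, OF R_meas Kr_meas P_ne])
  also have "\<dots> = P \<bind> Kr" by (simp only: distr_R)
  finally show ?thesis .
qed

lemma nu_class: "in_class_F (P \<bind> Kr)"
  unfolding in_class_F_def using nu_prob nu_sets nu_01 nu_sym nu_atom by blast

end

definition Ts :: "real \<Rightarrow> nat \<Rightarrow> real set" where "Ts x a = {y. ty x y = a}"

lemma Ts_eq: "Ts x a = (if a = 0 then {..x} else {}) \<union> (if a = 1 then {x<..} \<inter> {..1/2} else {})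
    \<union> (if a = 2 then {x<..} \<inter> {1/2<..} \<inter> {..<1-x} else {}) \<union> (if a = 3 then {x<..} \<inter> {1/2<..} \<inter> {1-x..} else {})"
  unfolding Ts_def ty_def by auto

lemma Ts_sets[measurable]: "Ts x a \<in> sets borel"
  unfolding Ts_eq by auto

definition bx :: "real \<Rightarrow> nat \<times> nat \<times> nat \<Rightarrow> (nat \<Rightarrow> real) set" where
  "bx x t = (case t of (a,b,c) \<Rightarrow> PiE {..<3} (\<lambda>l. if l = 0 then Ts x a else if l = 1 then Ts x b else Ts x c))"

definition Tg :: "(nat \<times> nat \<times> nat) set" where "Tg = {t \<in> {..<4} \<times> {..<4} \<times> {..<4}. good t}"

definition Good :: "real \<Rightarrow> (nat \<Rightarrow> real) set" where "Good x = (\<Union>t\<in>Tg. bx x t)"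

lemma lessThan3: "{..<3::nat} = {0,1,2}" by auto

lemma bx_mem: assumes "xs \<in> extensional {..<3}"
  shows "xs \<in> bx x (a,b,c) \<longleftrightarrow> ty x (xs 0) = a \<and> ty x (xs 1) = b \<and> ty x (xs 2) = c"
proof -
  have "xs \<in> bx x (a,b,c) \<longleftrightarrow> (\<forall>l\<in>{..<3}. xs l \<in> (if l = 0 then Ts x a else if l = 1 then Ts x b else Ts x c))"
    unfolding bx_def using assms by (simp add: PiE_iff)
  also have "\<dots> \<longleftrightarrow> xs 0 \<in> Ts x a \<and> xs 1 \<in> Ts x b \<and> xs 2 \<in> Ts x c"
    unfolding lessThan3 by simp
  finally show ?thesis unfolding Ts_def by simp
qed

lemma bx_ext: "bx x t \<subseteq> extensional {..<3}"
  by (cases t) (simp only: bx_def prod.case PiE_def Int_lower2)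

lemma Good_mem: assumes "xs \<in> extensional {..<3}"
  shows "xs \<in> Good x \<longleftrightarrow> good (ty x (xs 0), ty x (xs 1), ty x (xs 2))"
proof
  assume "xs \<in> Good x"
  then obtain a b c where t: "(a,b,c) \<in> Tg" "xs \<in> bx x (a,b,c)" unfolding Good_def by auto
  hence "ty x (xs 0) = a \<and> ty x (xs 1) = b \<and> ty x (xs 2) = c" using bx_mem[OF assms] by blast
  thus "good (ty x (xs 0), ty x (xs 1), ty x (xs 2))" using t(1) unfolding Tg_def by auto
next
  assume g: "good (ty x (xs 0), ty x (xs 1), ty x (xs 2))"
  hence "(ty x (xs 0), ty x (xs 1), ty x (xs 2)) \<in> Tg" unfolding Tg_def using ty_lt4 by auto
  moreover have "xs \<in> bx x (ty x (xs 0), ty x (xs 1), ty x (xs 2))" using bx_mem[OF assms] by blast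
  ultimately show "xs \<in> Good x" unfolding Good_def by blast
qed

lemma Tg_fin: "finite Tg" unfolding Tg_def by auto

context cF begin

lemma P_ext: "xs \<in> space P \<Longrightarrow> xs \<in> extensional {..<3}"
  unfolding P_space_eq by (simp add: PiE_iff)

lemma bx_sets: "bx x t \<in> sets P"
  unfolding bx_def by (auto split: prod.splits intro!: box_sets)

lemma bx_measure: "measure P (bx x (a,b,c)) = measure \<mu> (Ts x a) * measure \<mu> (Ts x b) * measure \<mu> (Ts x c)"
proof -
  have "measure P (bx x (a,b,c)) = (\<Prod>l<(3::nat). measure \<mu> (if l = 0 then Ts x a else if l = 1 then Ts x b else Ts x c))"
    unfolding bx_def by (simp only: prod.case) (rule box, auto)
  also have "\<dots> = measure \<mu> (Ts x a) * measure \<mu> (Ts x b) * measure \<mu> (Ts x c)"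
    by (simp add: numeral_3_eq_3 prod.lessThan_Suc)
  finally show ?thesis .
qed

lemma Good_sets: "Good x \<in> sets P"
  unfolding Good_def using Tg_fin by (intro sets.finite_UN) (auto intro: bx_sets)

lemma Good_measure: "measure P (Good x) = (\<Sum>t\<in>Tg. measure P (bx x t))"
  unfolding Good_def
proof (rule fp.finite_measure_finite_Union[OF Tg_fin])
  show "bx x ` Tg \<subseteq> sets P" using bx_sets by auto
  show "disjoint_family_on (bx x) Tg"
  unfolding disjoint_family_on_def
  proof (intro ballI impI)
    fix t t' assume tt: "t \<in> Tg" "t' \<in> Tg" "t \<noteq> t'"
    obtain a b c where t: "t = (a,b,c)" by (cases t) auto
    obtain a' b' c' where t': "t' = (a',b',c')" by (cases t') auto
    show "bx x t \<inter> bx x t' = {}"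
    proof (rule ccontr)
      assume "bx x t \<inter> bx x t' \<noteq> {}"
      then obtain xs where x1: "xs \<in> bx x (a,b,c)" and x2: "xs \<in> bx x (a',b',c')" unfolding t t' by blast
      have ne: "(a,b,c) \<noteq> (a',b',c')" using tt t t' by simp
      have e: "xs \<in> extensional {..<3}" using x1 bx_ext by blast
      show False using bx_mem[OF e, of x a b c] bx_mem[OF e, of x a' b' c'] x1 x2 ne by auto
    qed
  qed
qed

lemma Good_sum: "measure P (Good x) = (\<Sum>a<4. \<Sum>b<4. \<Sum>c<4. if good (a,b,c) then
     measure \<mu> (Ts x a) * measure \<mu> (Ts x b) * measure \<mu> (Ts x c) else 0)"
proof -
  define F where "F t = measure P (bx x t)" for t
  have "measure P (Good x) = (\<Sum>t\<in>Tg. F t)" unfolding F_def by (rule Good_measure)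
  also have "\<dots> = (\<Sum>t\<in>{..<4::nat} \<times> {..<4::nat} \<times> {..<4::nat}. if good t then F t else 0)"
    unfolding Tg_def by (rule sum.inter_filter) simp
  also have "\<dots> = (\<Sum>a<4. \<Sum>b<4. \<Sum>c<4. if good (a,b,c) then F (a,b,c) else 0)"
    unfolding sum.cartesian_product by (intro sum.cong) auto
  finally show ?thesis unfolding F_def bx_measure .
qed

lemma mu_refl: "A \<in> sets borel \<Longrightarrow> measure \<mu> ((\<lambda>y. 1 - y) -` A) = measure \<mu> A"
proof -
  assume A: "A \<in> sets borel"
  have "measure \<mu> A = measure (distr \<mu> borel (\<lambda>y::real. 1 - y)) A" by (simp only: mu_sym)
  also have "\<dots> = measure \<mu> ((\<lambda>y. 1 - y) -` A \<inter> space \<mu>)"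
    by (rule measure_distr[OF _ A]) (simp add: measurable_cong_sets[OF mu_sets refl])
  finally show ?thesis by simp
qed

lemma q_facts: assumes x: "x < 1/2"
  shows "measure \<mu> (Ts x 0) = measure \<mu> {..x}"
    "measure \<mu> (Ts x (Suc (Suc (Suc 0)))) = measure \<mu> {..x}"
    "measure \<mu> (Ts x (Suc (Suc 0))) = measure \<mu> (Ts x (Suc 0))"
    "measure \<mu> {..x} + measure \<mu> (Ts x (Suc 0)) = 1/2"
proof -
  have "Ts x 0 = {..x}" by (auto simp: Ts_def ty_def)
  thus q0: "measure \<mu> (Ts x 0) = measure \<mu> {..x}" by simp
  have "Ts x (Suc (Suc (Suc 0))) = (\<lambda>y. 1 - y) -` {..x}" using x by (auto simp: Ts_def ty_def)
  thus q3: "measure \<mu> (Ts x (Suc (Suc (Suc 0)))) = measure \<mu> {..x}" by (simp add: mu_refl)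
  have T1: "Ts x (Suc 0) = {x<..<1/2} \<union> {1/2}" using x by (auto simp: Ts_def ty_def)
  have "Ts x (Suc (Suc 0)) = (\<lambda>y. 1 - y) -` {x<..<1/2}" using x by (auto simp: Ts_def ty_def)
  hence "measure \<mu> (Ts x (Suc (Suc 0))) = measure \<mu> {x<..<1/2}" by (simp add: mu_refl)
  also have "\<dots> = measure \<mu> ({x<..<1/2} \<union> {1/2})"
    by (subst mu.finite_measure_Union) (auto simp: mu_atom)
  finally show q2: "measure \<mu> (Ts x (Suc (Suc 0))) = measure \<mu> (Ts x (Suc 0))" unfolding T1 .
  have "(\<Union>a\<in>{..<4}. Ts x a) = UNIV" using ty_lt4 by (auto simp: Ts_def)
  moreover have "measure \<mu> UNIV = 1" using mu.prob_space by simp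
  ultimately have "1 = measure \<mu> (\<Union>a\<in>{..<4}. Ts x a)" by simp
  also have "\<dots> = (\<Sum>a<4. measure \<mu> (Ts x a))"
    by (rule mu.finite_measure_finite_Union) (auto simp: disjoint_family_on_def Ts_def[symmetric] intro: Ts_sets, auto simp: Ts_def)
  also have "\<dots> = measure \<mu> (Ts x 0) + measure \<mu> (Ts x (Suc 0)) + measure \<mu> (Ts x (Suc (Suc 0))) + measure \<mu> (Ts x (Suc (Suc (Suc 0))))"
    by (simp add: eval_nat_numeral)
  finally show "measure \<mu> {..x} + measure \<mu> (Ts x (Suc 0)) = 1/2" using q0 q2 q3 by simp
qed

lemma S_eval: "(\<Sum>a<4. \<Sum>b<4. \<Sum>c<4. if good (a,b,c) then (q::nat\<Rightarrow>real) a * q b * q c else 0)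
   = (let q0 = q 0; q1 = q (Suc 0); q2 = q (Suc (Suc 0)); q3 = q (Suc (Suc (Suc 0))) in
      3*q1*q3*q3 + 6*q1*q2*q3 + 6*q0*q1*q2 + 3*q0*q0*q2 + 3*q0*q0*q1 + 3*q0*q1*q1 + q1*q1*q1
      + 3*q1*q1*q2 + 3*q1*q2*q2 + q2*q2*q2 + 3*q2*q2*q3 + 3*q2*q3*q3)"
  by (simp add: eval_nat_numeral good_def cnt_def Let_def algebra_simps)

lemma nu_tail: "measure (P \<bind> Kr) {1-x..} = measure (P \<bind> Kr) {..x}"
proof -
  have "measure (P \<bind> Kr) {..x} = measure (distr (P \<bind> Kr) borel (\<lambda>y::real. 1 - y)) {..x}"
    by (simp only: nu_sym)
  also have "\<dots> = measure (P \<bind> Kr) ((\<lambda>y. 1 - y) -` {..x} \<inter> space (P \<bind> Kr))"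
    by (rule measure_distr) (auto simp: measurable_cong_sets[OF nu_sets refl])
  also have "(\<lambda>y::real. 1 - y) -` {..x} \<inter> space (P \<bind> Kr) = {1-x..}" by (auto simp: nu_space)
  finally show ?thesis by simp
qed

lemma nu_split: assumes x: "x < 1/2"
  shows "measure (P \<bind> Kr) {..x} + measure (P \<bind> Kr) {x<..<1-x} + measure (P \<bind> Kr) {1-x..} = 1"
proof -
  interpret nu: prob_space "P \<bind> Kr" by (rule nu_prob)
  have U: "UNIV = {..x} \<union> ({x<..<1-x} \<union> {1-x..})" by auto
  have "1 = measure (P \<bind> Kr) UNIV" using nu.prob_space by (simp add: nu_space)
  also have "\<dots> = measure (P \<bind> Kr) {..x} + measure (P \<bind> Kr) ({x<..<1-x} \<union> {1-x..})"
    unfolding U by (rule nu.finite_measure_Union) (use x in \<open>auto simp: nu_sets\<close>)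
  also have "measure (P \<bind> Kr) ({x<..<1-x} \<union> {1-x..}) = measure (P \<bind> Kr) {x<..<1-x} + measure (P \<bind> Kr) {1-x..}"
    by (rule nu.finite_measure_Union) (auto simp: nu_sets)
  finally show ?thesis by simp
qed

lemma nu_mid: assumes x: "x < 1/2"
  shows "measure P (Good x) \<le> measure (P \<bind> Kr) {x<..<1-x}"
proof -
  have "AE xs in P. indicator (Good x) xs \<le> emeasure (Kr xs) {x<..<1-x}"
  proof -
    have t01: "AE xs in P. xs 0 \<noteq> xs 1" by (rule AE_tie) auto
    have t02: "AE xs in P. xs 0 \<noteq> xs 2" by (rule AE_tie) auto
    have t12: "AE xs in P. xs 1 \<noteq> xs 2" by (rule AE_tie) auto
    show ?thesis using AE_01 t01 t02 t12 AE_space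
    proof eventually_elim
      case (elim xs)
      show ?case
      proof (cases "xs \<in> Good x")
        case True
        hence g: "good (ty x (xs 0), ty x (xs 1), ty x (xs 2))" using Good_mem P_ext elim by blast
        have B: "\<forall>l<3. 0 \<le> xs l \<and> xs l \<le> 1" using elim by auto
        have "\<forall>l\<in>winners 3 xs. xs l \<in> {x<..<1-x}"
          using good_mid[OF x B _ _ _ g] elim by auto
        hence "emeasure (Kr xs) {x<..<1-x} = 1" by (intro Kr_one) auto
        thus ?thesis by (simp add: indicator_def)
      next
        case False thus ?thesis by simp
      qed
    qed
  qed
  hence "(\<integral>\<^sup>+ xs. indicator (Good x) xs \<partial>P) \<le> (\<integral>\<^sup>+ xs. emeasure (Kr xs) {x<..<1-x} \<partial>P)"
    by (rule nn_integral_mono_AE)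
  hence "emeasure P (Good x) \<le> emeasure (P \<bind> Kr) {x<..<1-x}"
    using Good_sets by (simp add: nu_emeasure)
  thus ?thesis by (simp add: fp.emeasure_eq_measure nu_em)
qed

lemma step_ineq: assumes x: "x < 1/2"
  shows "measure (P \<bind> Kr) {..x} \<le> 3/4 * measure \<mu> {..x} + (measure \<mu> {..x})^3"
proof -
  define G where "G = measure \<mu> {..x}"
  define h where "h = measure \<mu> (Ts x (Suc 0))"
  note q = q_facts[OF x, folded G_def h_def]
  have hG: "h = 1/2 - G" using q(4) by simp
  have "measure P (Good x) = 3*h*G*G + 6*h*h*G + 6*G*h*h + 3*G*G*h + 3*G*G*h + 3*G*h*h + h*h*h
      + 3*h*h*h + 3*h*h*h + h*h*h + 3*h*h*G + 3*h*G*G"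
    unfolding Good_sum S_eval Let_def using q by (simp add: G_def h_def)
  also have "\<dots> = 1 - 3/2*G - 2*G^3" unfolding hG by (simp add: power3_eq_cube algebra_simps) argo
  finally have S: "measure P (Good x) = 1 - 3/2*G - 2*G^3" .
  show ?thesis using nu_split[OF x] nu_tail[of x] nu_mid[OF x] S unfolding G_def by argo
qed

end




lemma ps_eq: "plurality_step 3 \<mu> = PiM {..<3::nat} (\<lambda>_. \<mu>) \<bind> Kr"
  unfolding plurality_step_def Kr_def ..

lemma class_iter: "in_class_F M0 \<Longrightarrow> in_class_F (replicator 3 M0 n)"
proof (induction n)
  case 0 thus ?case by (simp add: replicator_def)
next
  case (Suc n)
  interpret cF "replicator 3 M0 n" by (rule cF.intro) (rule Suc.IH[OF Suc.prems])
  have "replicator 3 M0 (Suc n) = plurality_step 3 (replicator 3 M0 n)" by (simp add: replicator_def)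
  thus ?case using nu_class by (simp add: ps_eq)
qed

lemma rep_step: assumes "in_class_F M0" "x < 1/2"
  shows "replicator_cdf 3 M0 (Suc n) x \<le> 3/4 * replicator_cdf 3 M0 n x + (replicator_cdf 3 M0 n x)^3"
proof -
  interpret cF "replicator 3 M0 n" by (rule cF.intro) (rule class_iter[OF assms(1)])
  have "replicator 3 M0 (Suc n) = plurality_step 3 (replicator 3 M0 n)" by (simp add: replicator_def)
  thus ?thesis using step_ineq[OF assms(2)] by (simp add: replicator_cdf_def ps_eq)
qed

lemma rep_bounds: assumes "in_class_F M0" "x < 1/2"
  shows "0 \<le> replicator_cdf 3 M0 n x" "replicator_cdf 3 M0 n x \<le> 1/2"
proof -
  interpret cF "replicator 3 M0 n" by (rule cF.intro) (rule class_iter[OF assms(1)])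
  show "0 \<le> replicator_cdf 3 M0 n x" by (simp add: replicator_cdf_def)
  have "0 \<le> measure (replicator 3 M0 n) (Ts x (Suc 0))" by simp
  thus "replicator_cdf 3 M0 n x \<le> 1/2" using q_facts(4)[OF assms(2)] unfolding replicator_cdf_def by linarith
qed

lemma rep_mono: assumes "in_class_F M0" "x < 1/2"
  shows "replicator_cdf 3 M0 n x \<le> replicator_cdf 3 M0 0 x"
proof (induction n)
  case 0 thus ?case by simp
next
  case (Suc n)
  define F where "F = replicator_cdf 3 M0 n x"
  have F: "0 \<le> F" "F \<le> 1/2" using rep_bounds[OF assms] unfolding F_def by auto
  have "F * F \<le> 1/2 * (1/2)" using F by (intro mult_mono) auto
  hence "F * F * F \<le> 1/4 * F" using F by (intro mult_right_mono) auto
  hence "3/4 * F + F^3 \<le> F" unfolding power3_eq_cube by linarith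
  thus ?case using rep_step[OF assms, of n] Suc.IH unfolding F_def by linarith
qed

theorem mainTheorem3:
  fixes M0 :: "real measure" and x :: real and t :: nat
  assumes "in_class_F M0" and "x < 1/2" and "t > 0"
  shows "replicator_cdf 3 M0 t x
           \<le> 3/4 * replicator_cdf 3 M0 (t - 1) x + (replicator_cdf 3 M0 (t - 1) x) ^ 3
         \<and> replicator_cdf 3 M0 t x
           \<le> measure M0 {..x} * (3/4 + (measure M0 {..x})^2) ^ t"
proof
  have t: "t = Suc (t - 1)" using assms(3) by simp
  show "replicator_cdf 3 M0 t x
           \<le> 3/4 * replicator_cdf 3 M0 (t - 1) x + (replicator_cdf 3 M0 (t - 1) x) ^ 3"
    using rep_step[OF assms(1,2), of "t - 1"] t by simp
next
  define F0 where "F0 = measure M0 {..x}"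
  have F00: "replicator_cdf 3 M0 0 x = F0" by (simp add: replicator_cdf_def replicator_def F0_def)
  have F0: "0 \<le> F0" using rep_bounds(1)[OF assms(1,2), of 0] F00 by simp
  have "replicator_cdf 3 M0 n x \<le> F0 * (3/4 + F0^2) ^ n" for n
  proof (induction n)
    case 0 thus ?case using F00 by simp
  next
    case (Suc n)
    define F where "F = replicator_cdf 3 M0 n x"
    have F: "0 \<le> F" "F \<le> F0" using rep_bounds(1)[OF assms(1,2)] rep_mono[OF assms(1,2)] F00 unfolding F_def by auto
    have "replicator_cdf 3 M0 (Suc n) x \<le> F * (3/4 + F^2)"
      using rep_step[OF assms(1,2), of n] unfolding F_def by (simp add: algebra_simps power3_eq_cube power2_eq_square)
    also have "\<dots> \<le> F * (3/4 + F0^2)"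
      using F by (intro mult_left_mono add_left_mono power_mono) auto
    also have "\<dots> \<le> (F0 * (3/4 + F0^2) ^ n) * (3/4 + F0^2)"
      using Suc.IH unfolding F_def[symmetric] by (intro mult_right_mono) auto
    also have "\<dots> = F0 * (3/4 + F0^2) ^ Suc n" by simp
    finally show ?case .
  qed
  thus "replicator_cdf 3 M0 t x \<le> measure M0 {..x} * (3/4 + (measure M0 {..x})^2) ^ t"
    unfolding F0_def by blast
qed


end
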